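(* Let $(\Omega,\mathcal F,\mathcal P)$ be pre-Hahn-localizable with $\mathcal P$ convex, and let $\mathcal Q$ and $\mathcal Q'$ be two localizations with corresponding pairwise disjoint support sets $\{S_Q:Q\in\mathcal Q\}$ and $\{T_{Q'}:Q'\in\mathcal Q'\}$. Then $(\mathcal H_{\mathcal F}^{\mathcal Q})^{\mathcal P}=(\mathcal H_{\mathcal F}^{\mathcal Q'})^{\mathcal P}$, where the measures of $\mathcal P$ are extended to the Hahn-extensions in the canonical way.
   Context: $\mathcal P$ is a family of probability measures on $\mathcal F$. $\mathcal P\lll\mathcal Q$ means each $P\in\mathcal P$ is absolutely continuous w.r.t. some $Q\in\mathcal Q$; $\mathrm{sconv}(\mathcal Q)$ denotes countable convex combinations. A localization of $\mathcal P$ is a family $\mathcal Q$ of probability measures on $\mathcal F$ together with support sets $S_Q\in\mathcal F$ such that $Q(S_R)=\delta_{QR}$ for $Q,R\in\mathcal Q$ and $\mathcal Q\lll\mathcal P\lll\mathrm{sconv}(\mathcal Q)$; $\mathcal P$ is pre-Hahn-localizable if a localization exists. The Hahn-extension is $\mathcal H_{\mathcal F}^{\mathcal Q}=\sigma\big(\mathcal F\cup\{\bigcup_{Q\in\mathcal Q}E_Q:E_Q\in\mathcal F,E_Q\subseteq S_Q\}\big)$; each $P\in\mathcal P$ extends to $\mathcal H_{\mathcal F}^{\mathcal Q}$ by $P^{\mathcal Q}(A)=\sum_{Q\in\mathcal Q(P)}P(A\cap S_Q)$, where $\mathcal Q(P)=\{Q\in\mathcal Q:P(S_Q)>0\}$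 is countable. For a σ-algebra $\mathcal G$ carrying the measures of $\mathcal P$, $\mathcal G^{\mathcal P}=\bigcap_{P\in\mathcal P}\{G\cup Z:G\in\mathcal G, Z\subseteq N\in\mathcal G, P(N)=0\}$. *)

theory Defs
  imports "HOL-Probability.Probability"
begin

definition prob_on :: "'a set \<Rightarrow> 'a set set \<Rightarrow> 'a measure \<Rightarrow> bool" where
  "prob_on \<Omega> F P \<longleftrightarrow> prob_space P \<and> space P = \<Omega> \<and> sets P = F"

text \<open>lll A B: each P in A is absolutely continuous w.r.t. some Q in B
  (absolutely_continuous Q P means null sets of Q are null sets of P).\<close>
definition lll :: "'a measure set \<Rightarrow> 'a measure set \<Rightarrow> bool" where
  "lll A B \<longleftrightarrow> (\<forall>P\<in>A. \<exists>Q\<in>B. absolutely_continuous Q P)"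

definition sconv :: "'a set \<Rightarrow> 'a set set \<Rightarrow> 'a measure set \<Rightarrow> 'a measure set" where
  "sconv \<Omega> F \<Q> = {R. prob_on \<Omega> F R \<and>
     (\<exists>(c::nat \<Rightarrow> real) q. (\<forall>n. q n \<in> \<Q> \<and> 0 \<le> c n) \<and> c sums 1 \<and>
        (\<forall>A\<in>F. measure R A = (\<Sum>n. c n * measure (q n) A)))}"

definition is_localization ::
  "'a set \<Rightarrow> 'a set set \<Rightarrow> 'a measure set \<Rightarrow> 'a measure set \<Rightarrow> ('a measure \<Rightarrow> 'a set) \<Rightarrow> bool" where
  "is_localization \<Omega> F \<P> \<Q> S \<longleftrightarrow>
     (\<forall>Q\<in>\<Q>. prob_on \<Omega> F Q \<and> S Q \<in> F) \<and>
     (\<forall>Q\<in>\<Q>. \<forall>R\<in>\<Q>. measure Q (S R) = (if Q = R then 1 else 0)) \<and>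
     lll \<Q> \<P> \<and> lll \<P> (sconv \<Omega> F \<Q>)"

definition pre_hahn_localizable :: "'a set \<Rightarrow> 'a set set \<Rightarrow> 'a measure set \<Rightarrow> bool" where
  "pre_hahn_localizable \<Omega> F \<P> \<longleftrightarrow> (\<exists>\<Q> S. is_localization \<Omega> F \<P> \<Q> S)"

definition convex_family :: "'a set set \<Rightarrow> 'a measure set \<Rightarrow> bool" where
  "convex_family F \<P> \<longleftrightarrow> (\<forall>P1\<in>\<P>. \<forall>P2\<in>\<P>. \<forall>t::real. 0 \<le> t \<and> t \<le> 1 \<longrightarrow>
     (\<exists>P\<in>\<P>. \<forall>A\<in>F. measure P A = t * measure P1 A + (1 - t) * measure P2 A))"

definition hahn_ext :: "'a set \<Rightarrow> 'a set set \<Rightarrow> 'a measure set \<Rightarrow> ('a measure \<Rightarrow> 'a set) \<Rightarrow> 'a set set" where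
  "hahn_ext \<Omega> F \<Q> S = sigma_sets \<Omega>
     (F \<union> {(\<Union>Q\<in>\<Q>. E Q) | E. \<forall>Q\<in>\<Q>. E Q \<in> F \<and> E Q \<subseteq> S Q})"

definition hahn_meas :: "'a measure set \<Rightarrow> ('a measure \<Rightarrow> 'a set) \<Rightarrow> 'a measure \<Rightarrow> 'a set \<Rightarrow> ennreal" where
  "hahn_meas \<Q> S P A = (\<Sum>\<^sub>\<infinity>Q\<in>{Q\<in>\<Q>. 0 < measure P (S Q)}. emeasure P (A \<inter> S Q))"

definition fam_completion ::
  "'a set set \<Rightarrow> ('a measure \<Rightarrow> 'a set \<Rightarrow> ennreal) \<Rightarrow> 'a measure set \<Rightarrow> 'a set set" where
  "fam_completion G \<mu> \<P> = (\<Inter>P\<in>\<P>. {G' \<union> Z | G' Z. G' \<in> G \<and> (\<exists>N\<in>G. Z \<subseteq> N \<and> \<mu> P N = 0)})"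

end

theory Submission
  imports Defs
begin


lemma hahn_ext_sa:
  assumes sa: "sigma_algebra \<Omega> F" and SF: "\<forall>Q\<in>\<Q>. S Q \<in> F"
  shows "sigma_algebra \<Omega> (hahn_ext \<Omega> F \<Q> S)"
proof -
  interpret sigma_algebra \<Omega> F by fact
  have "F \<union> {(\<Union>Q\<in>\<Q>. E Q) | E. \<forall>Q\<in>\<Q>. E Q \<in> F \<and> E Q \<subseteq> S Q} \<subseteq> Pow \<Omega>"
    using SF sets_into_space by blast
  then show ?thesis unfolding hahn_ext_def by (rule sigma_algebra_sigma_sets)
qed

lemma F_in_hahn: "A \<in> F \<Longrightarrow> A \<in> hahn_ext \<Omega> F \<Q> S"
  unfolding hahn_ext_def by (auto intro: sigma_sets.Basic)

lemma gen_in_hahn: "\<forall>Q\<in>\<Q>. E Q \<in> F \<and> E Q \<subseteq> S Q \<Longrightarrow> (\<Union>Q\<in>\<Q>. E Q) \<in> hahn_ext \<Omega> F \<Q> S"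
  unfolding hahn_ext_def by (rule sigma_sets.Basic) blast

lemma hahn_trace:
  assumes sa: "sigma_algebra \<Omega> F" and SF: "\<forall>Q\<in>\<Q>. S Q \<in> F"
    and disj: "disjoint_family_on S \<Q>" and A: "A \<in> hahn_ext \<Omega> F \<Q> S" and Q0: "Q0 \<in> \<Q>"
  shows "A \<inter> S Q0 \<in> F"
  using A unfolding hahn_ext_def
proof (induction rule: sigma_sets.induct)
  interpret sigma_algebra \<Omega> F by fact
  case (Basic a)
  then show ?case
  proof
    assume "a \<in> F" thus ?thesis using SF Q0 by blast
  next
    assume "a \<in> {(\<Union>Q\<in>\<Q>. E Q) | E. \<forall>Q\<in>\<Q>. E Q \<in> F \<and> E Q \<subseteq> S Q}"
    then obtain E where a: "a = (\<Union>Q\<in>\<Q>. E Q)" and E: "\<forall>Q\<in>\<Q>. E Q \<in> F \<and> E Q \<subseteq> S Q" by blast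
    have "a \<inter> S Q0 = E Q0"
    proof (intro equalityI subsetI)
      fix x assume "x \<in> a \<inter> S Q0"
      then obtain Q where Q: "Q \<in> \<Q>" "x \<in> E Q" "x \<in> S Q0" unfolding a by blast
      show "x \<in> E Q0"
      proof (cases "Q = Q0")
        case True then show ?thesis using Q by simp
      next
        case False
        then have "S Q \<inter> S Q0 = {}" using disj Q0 Q(1) unfolding disjoint_family_on_def by blast
        then show ?thesis using Q E by blast
      qed
    next
      fix x assume "x \<in> E Q0" then show "x \<in> a \<inter> S Q0" using E Q0 unfolding a by blast
    qed
    then show ?thesis using E Q0 by simp
  qed
next
  interpret sigma_algebra \<Omega> F by fact
  case Empty
  show ?case by simp
next
  interpret sigma_algebra \<Omega> F by fact
  case (Compl a)
  have "(\<Omega> - a) \<inter> S Q0 = S Q0 - (a \<inter> S Q0)" using SF Q0 sets_into_space by blast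
  then show ?case using Compl SF Q0 by auto
next
  interpret sigma_algebra \<Omega> F by fact
  case (Union a)
  have "(\<Union>i. a i) \<inter> S Q0 = (\<Union>i. a i \<inter> S Q0)" by blast
  moreover have "(\<Union>i. a i \<inter> S Q0) \<in> F" using Union(2) by (intro countable_UN') auto
  ultimately show ?case by simp
qed

lemma hahn_null_iff:
  assumes P: "prob_on \<Omega> F P" and SF: "\<forall>Q\<in>\<Q>. S Q \<in> F"
  shows "hahn_meas \<Q> S P X = 0 \<longleftrightarrow> (\<forall>Q\<in>\<Q>. emeasure P (X \<inter> S Q) = 0)"
proof
  let ?f = "\<lambda>Q. emeasure P (X \<inter> S Q)"
  assume h: "hahn_meas \<Q> S P X = 0"
  show "\<forall>Q\<in>\<Q>. ?f Q = 0"
  proof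
    fix Q assume Q: "Q \<in> \<Q>"
    show "?f Q = 0"
    proof (cases "0 < measure P (S Q)")
      case True
      have "infsum ?f {Q} \<le> infsum ?f {Q\<in>\<Q>. 0 < measure P (S Q)}"
        by (rule infsum_mono_neutral) (use True Q in \<open>auto simp: nonneg_summable_on_complete\<close>)
      then have "?f Q \<le> 0" using h by (simp add: hahn_meas_def)
      thus ?thesis by simp
    next
      case False
      then have "measure P (S Q) = 0" using measure_nonneg[of P "S Q"] by linarith
      moreover have "prob_space P" "sets P = F" using P by (auto simp: prob_on_def)
      ultimately have "emeasure P (S Q) = 0" using SF Q
        by (simp add: finite_measure.emeasure_eq_measure[OF prob_space.finite_measure])
      then show ?thesis using emeasure_mono[of "X \<inter> S Q" "S Q" P] SF Q \<open>sets P = F\<close> by auto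
    qed
  qed
next
  assume "\<forall>Q\<in>\<Q>. emeasure P (X \<inter> S Q) = 0"
  then show "hahn_meas \<Q> S P X = 0" unfolding hahn_meas_def by (intro infsum_0) auto
qed



lemma conc:
  assumes sa: "sigma_algebra \<Omega> F" and hp: "\<forall>P\<in>\<P>. prob_on \<Omega> F P" and P: "P \<in> \<P>"
    and loc: "is_localization \<Omega> F \<P> \<Q> S"
  obtains q :: "nat \<Rightarrow> 'a measure" where "\<forall>n. q n \<in> \<Q>" "\<Omega> - (\<Union>n. S (q n)) \<in> null_sets P"
    "\<And>Q E. Q \<in> \<Q> \<Longrightarrow> E \<in> F \<Longrightarrow> E \<subseteq> S Q \<Longrightarrow> E \<in> null_sets Q \<Longrightarrow> E \<in> null_sets P"
proof -
  interpret sigma_algebra \<Omega> F by fact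
  have SF: "\<forall>Q\<in>\<Q>. prob_on \<Omega> F Q \<and> S Q \<in> F"
    and SS: "\<forall>Q\<in>\<Q>. \<forall>R\<in>\<Q>. measure Q (S R) = (if Q = R then 1 else 0)"
    and l2: "lll \<P> (sconv \<Omega> F \<Q>)" using loc unfolding is_localization_def by auto
  from l2 P obtain R where R: "R \<in> sconv \<Omega> F \<Q>" and ac: "absolutely_continuous R P"
    unfolding lll_def by blast
  from R obtain c q where Rp: "prob_on \<Omega> F R" and cq: "\<forall>n. q n \<in> \<Q> \<and> 0 \<le> c n"
    and Rm: "\<forall>A\<in>F. measure R A = (\<Sum>n. c n * measure (q n) A)"
    unfolding sconv_def by blast
  have tr: "A \<in> null_sets P" if "A \<in> F" "measure R A = 0" for A
  proof -
    have "prob_space R" "sets R = F" using Rp by (auto simp: prob_on_def)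
    then have "emeasure R A = 0" using that
      by (simp add: finite_measure.emeasure_eq_measure[OF prob_space.finite_measure])
    then have "A \<in> null_sets R" using that \<open>sets R = F\<close> by auto
    then show ?thesis using ac unfolding absolutely_continuous_def by blast
  qed
  have qp: "prob_space (q n)" "sets (q n) = F" "space (q n) = \<Omega>" for n
    using cq SF by (auto simp: prob_on_def)
  show ?thesis
  proof (rule that[of q])
    show "\<forall>n. q n \<in> \<Q>" using cq by blast
    let ?A = "\<Omega> - (\<Union>n. S (q n))"
    have AF: "?A \<in> F" using cq SF by (intro Diff top countable_UN') auto
    have "measure (q n) ?A = 0" for n
    proof -
      have "measure (q n) ?A \<le> measure (q n) (\<Omega> - S (q n))"
        by (rule finite_measure.finite_measure_mono[OF prob_space.finite_measure[OF qp(1)]])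
           (use qp cq SF in auto)
      also have "\<dots> = 1 - measure (q n) (S (q n))"
        using prob_space.prob_compl[OF qp(1), of "S (q n)"] qp cq SF by auto
      also have "\<dots> = 0" using SS cq by auto
      finally show ?thesis using measure_nonneg[of "q n" ?A] by linarith
    qed
    then show "?A \<in> null_sets P" using tr[OF AF] Rm AF by simp
  next
    fix Q E assume Q: "Q \<in> \<Q>" and E: "E \<in> F" "E \<subseteq> S Q" "E \<in> null_sets Q"
    have "measure (q n) E = 0" for n
    proof (cases "q n = Q")
      case True
      then show ?thesis using E(3) by (simp add: measure_def null_setsD1)
    next
      case False
      have "measure (q n) E \<le> measure (q n) (S Q)"
        by (rule finite_measure.finite_measure_mono[OF prob_space.finite_measure[OF qp(1)]])
           (use qp Q SF E in auto)
      also have "\<dots> = 0" using SS cq Q False by auto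
      finally show ?thesis using measure_nonneg[of "q n" E] by linarith
    qed
    then show "E \<in> null_sets P" using tr[OF E(1)] Rm E(1) by simp
  qed
qed



lemma sa_ops:
  assumes "sigma_algebra \<Omega> H"
  shows "{} \<in> H" "\<And>a. a \<in> H \<Longrightarrow> \<Omega> - a \<in> H" "\<And>a b. a \<in> H \<Longrightarrow> b \<in> H \<Longrightarrow> a \<union> b \<in> H"
    "\<And>a b. a \<in> H \<Longrightarrow> b \<in> H \<Longrightarrow> a - b \<in> H"
    "\<And>A. (\<And>i::nat. A i \<in> H) \<Longrightarrow> (\<Union>i. A i) \<in> H" "\<And>a. a \<in> H \<Longrightarrow> a \<subseteq> \<Omega>"
proof -
  interpret sigma_algebra \<Omega> H by fact
  show "{} \<in> H" "\<And>a. a \<in> H \<Longrightarrow> \<Omega> - a \<in> H" "\<And>a b. a \<in> H \<Longrightarrow> b \<in> H \<Longrightarrow> a \<union> b \<in> H"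
    "\<And>a b. a \<in> H \<Longrightarrow> b \<in> H \<Longrightarrow> a - b \<in> H"
    "\<And>A. (\<And>i::nat. A i \<in> H) \<Longrightarrow> (\<Union>i. A i) \<in> H" "\<And>a. a \<in> H \<Longrightarrow> a \<subseteq> \<Omega>"
    using sets_into_space by auto
qed

lemma one_dir:
  assumes sa: "sigma_algebra \<Omega> F" and hp: "\<forall>P\<in>\<P>. prob_on \<Omega> F P"
    and locS: "is_localization \<Omega> F \<P> \<Q> S" and dS: "disjoint_family_on S \<Q>"
    and locT: "is_localization \<Omega> F \<P> \<Q>' T" and dT: "disjoint_family_on T \<Q>'"
  shows "fam_completion (hahn_ext \<Omega> F \<Q>' T) (hahn_meas \<Q>' T) \<P>
       \<subseteq> fam_completion (hahn_ext \<Omega> F \<Q> S) (hahn_meas \<Q> S) \<P>"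
proof -
  define H where "H = hahn_ext \<Omega> F \<Q> S"
  define H' where "H' = hahn_ext \<Omega> F \<Q>' T"
  have SF: "\<forall>Q\<in>\<Q>. S Q \<in> F" and TF: "\<forall>Q\<in>\<Q>'. T Q \<in> F"
    using locS locT unfolding is_localization_def by auto
  have QF: "\<forall>Q\<in>\<Q>. prob_on \<Omega> F Q"
    using locS unfolding is_localization_def by auto
  have l1S: "lll \<Q> \<P>" using locS unfolding is_localization_def by auto
  have Hsa: "sigma_algebra \<Omega> H" unfolding H_def by (rule hahn_ext_sa[OF sa SF])
  note HE = sa_ops(1)[OF Hsa] and HC = sa_ops(2)[OF Hsa] and HUn = sa_ops(3)[OF Hsa]
    and HD = sa_ops(4)[OF Hsa] and HU = sa_ops(5)[OF Hsa] and HS = sa_ops(6)[OF Hsa]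
  note FI = sa_ops[OF sa]
  have trS: "X \<inter> S Q \<in> F" if "X \<in> H" "Q \<in> \<Q>" for X Q
    using hahn_trace[OF sa SF dS] that unfolding H_def by blast
  have trT: "X \<inter> T Q \<in> F" if "X \<in> H'" "Q \<in> \<Q>'" for X Q
    using hahn_trace[OF sa TF dT] that unfolding H'_def by blast
  have gS: "(\<Union>Q\<in>\<Q>. E Q) \<in> H" if "\<forall>Q\<in>\<Q>. E Q \<in> F \<and> E Q \<subseteq> S Q" for E
    using gen_in_hahn[OF that] unfolding H_def .
  have main: "{G' \<union> Z | G' Z. G' \<in> H' \<and> (\<exists>N\<in>H'. Z \<subseteq> N \<and> hahn_meas \<Q>' T P N = 0)}
     \<subseteq> {G' \<union> Z | G' Z. G' \<in> H \<and> (\<exists>N\<in>H. Z \<subseteq> N \<and> hahn_meas \<Q> S P N = 0)}"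
    if P: "P \<in> \<P>" for P
  proof -
    have Pp: "prob_on \<Omega> F P" using hp P by blast
    then have sP: "sets P = F" by (simp add: prob_on_def)
    obtain qS :: "nat \<Rightarrow> 'a measure" where "\<forall>n. qS n \<in> \<Q>" "\<Omega> - (\<Union>n. S (qS n)) \<in> null_sets P" and
      PS: "\<And>Q E. Q \<in> \<Q> \<Longrightarrow> E \<in> F \<Longrightarrow> E \<subseteq> S Q \<Longrightarrow> E \<in> null_sets Q \<Longrightarrow> E \<in> null_sets P"
      by (rule conc[OF sa hp P locS]) blast
    obtain qT :: "nat \<Rightarrow> 'a measure" where qT: "\<forall>n. qT n \<in> \<Q>'"
      and PT: "\<Omega> - (\<Union>n. T (qT n)) \<in> null_sets P"
      and "\<And>Q E. Q \<in> \<Q>' \<Longrightarrow> E \<in> F \<Longrightarrow> E \<subseteq> T Q \<Longrightarrow> E \<in> null_sets Q \<Longrightarrow> E \<in> null_sets P"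
      by (rule conc[OF sa hp P locT]) blast
    define nul where "nul N \<longleftrightarrow> N \<in> H \<and> (\<forall>Q\<in>\<Q>. N \<inter> S Q \<in> null_sets P)" for N
    have nul_iff: "N \<in> H \<and> hahn_meas \<Q> S P N = 0 \<longleftrightarrow> nul N" for N
      using hahn_null_iff[OF Pp SF, of N] trS sP unfolding nul_def by auto
    define C where "C = {G' \<union> Z | G' Z. G' \<in> H \<and> (\<exists>N. nul N \<and> Z \<subseteq> N)}"
    have ex_eq: "(\<exists>N\<in>H. Z \<subseteq> N \<and> hahn_meas \<Q> S P N = 0) = (\<exists>N. nul N \<and> Z \<subseteq> N)" for Z
      using nul_iff by metis
    have C_eq: "C = {G' \<union> Z | G' Z. G' \<in> H \<and> (\<exists>N\<in>H. Z \<subseteq> N \<and> hahn_meas \<Q> S P N = 0)}"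
      unfolding C_def ex_eq ..
    have nul_empty: "nul {}" unfolding nul_def using HE by simp
    have Cmem: "G \<union> Z \<in> C" if "G \<in> H" "nul N" "Z \<subseteq> N" for G Z N
      unfolding C_def using that by blast
    have Cdest: "\<exists>G Z N. x = G \<union> Z \<and> G \<in> H \<and> nul N \<and> Z \<subseteq> N" if "x \<in> C" for x
      using that unfolding C_def by blast
    have nul_Un: "nul (a \<union> b)" if "nul a" "nul b" for a b
    proof -
      have "(a \<union> b) \<inter> S Q = (a \<inter> S Q) \<union> (b \<inter> S Q)" for Q by blast
      then show ?thesis using that HUn unfolding nul_def by (auto intro: null_sets.Un)
    qed
    have nul_UN: "nul (\<Union>i. A i)" if "\<And>i::nat. nul (A i)" for A
    proof -
      show ?thesis unfolding nul_def
      proof (intro conjI ballI)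
        show "(\<Union>i. A i) \<in> H" by (rule HU) (use that in \<open>simp add: nul_def\<close>)
        fix Q assume "Q \<in> \<Q>"
        then have "(\<Union>i. A i \<inter> S Q) \<in> null_sets P" using that unfolding nul_def by (intro null_sets_UN) simp
        moreover have "(\<Union>i. A i) \<inter> S Q = (\<Union>i. A i \<inter> S Q)" by blast
        ultimately show "(\<Union>i. A i) \<inter> S Q \<in> null_sets P" by (simp only:)
      qed
    qed
    have nul_sub: "nul X" if "nul N" "X \<in> H" "X \<subseteq> N" for X N
      unfolding nul_def
    proof (intro conjI ballI)
      fix Q assume Q: "Q \<in> \<Q>"
      show "X \<inter> S Q \<in> null_sets P"
        by (rule null_sets_subset[of "N \<inter> S Q"]) (use that Q trS sP in \<open>auto simp: nul_def\<close>)
    qed (use that in simp)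
    have genC: "a \<in> C" if "a \<in> {(\<Union>Q\<in>\<Q>'. E Q) | E. \<forall>Q\<in>\<Q>'. E Q \<in> F \<and> E Q \<subseteq> T Q}" for a
    proof -
      from that obtain E where a: "a = (\<Union>Q\<in>\<Q>'. E Q)" and E: "\<forall>Q\<in>\<Q>'. E Q \<in> F \<and> E Q \<subseteq> T Q"
        unfolding mem_Collect_eq by (elim exE conjE)
      have ex: "\<forall>Q\<in>\<Q>. \<exists>q::nat\<Rightarrow>'a measure. (\<forall>n. q n \<in> \<Q>') \<and> S Q - (\<Union>n. T (q n)) \<in> null_sets P"
      proof
        fix Q assume Q: "Q \<in> \<Q>"
        from l1S Q obtain P0 where P0: "P0 \<in> \<P>" and ac: "absolutely_continuous P0 Q"
          unfolding lll_def by blast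
        obtain q :: "nat \<Rightarrow> 'a measure" where q: "\<forall>n. q n \<in> \<Q>'"
          and nq: "\<Omega> - (\<Union>n. T (q n)) \<in> null_sets P0"
          and "\<And>Q E. Q \<in> \<Q>' \<Longrightarrow> E \<in> F \<Longrightarrow> E \<subseteq> T Q \<Longrightarrow> E \<in> null_sets Q \<Longrightarrow> E \<in> null_sets P0"
          by (rule conc[OF sa hp P0 locT]) blast
        have h1: "\<Omega> - (\<Union>n. T (q n)) \<in> null_sets Q" using nq ac unfolding absolutely_continuous_def by blast
        have sQ: "sets Q = F" using QF Q by (simp add: prob_on_def)
        have TqF: "(\<Union>n. T (q n)) \<in> F" using q TF by (intro FI(5)) auto
        have SO: "S Q \<subseteq> \<Omega>" using SF Q FI(6) by blast
        have SqF: "S Q - (\<Union>n. T (q n)) \<in> F" by (rule FI(4)) (use SF Q TqF in auto)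
        have sub: "S Q - (\<Union>n. T (q n)) \<subseteq> \<Omega> - (\<Union>n. T (q n))" using SO by blast
        have "S Q - (\<Union>n. T (q n)) \<in> null_sets Q"
          by (rule null_sets_subset[OF h1 _ sub]) (simp add: sQ SqF)
        then have "S Q - (\<Union>n. T (q n)) \<in> null_sets P"
          by (rule PS[OF Q SqF Diff_subset])
        then show "\<exists>q::nat\<Rightarrow>'a measure. (\<forall>n. q n \<in> \<Q>') \<and> S Q - (\<Union>n. T (q n)) \<in> null_sets P"
          using q by (intro exI[of _ q] conjI)
      qed
      from bchoice[OF ex] obtain qq :: "'a measure \<Rightarrow> nat \<Rightarrow> 'a measure" where qq: "\<forall>Q\<in>\<Q>. (\<forall>n. qq Q n \<in> \<Q>') \<and> S Q - (\<Union>n. T (qq Q n)) \<in> null_sets P"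
        by metis
      have qqQ: "qq Q n \<in> \<Q>'" if "Q \<in> \<Q>" for Q n using bspec[OF qq that] by simp
      have qqN: "S Q - (\<Union>n. T (qq Q n)) \<in> null_sets P" if "Q \<in> \<Q>" for Q
        using bspec[OF qq that] by (rule conjunct2)
      define G where "G = (\<Union>Q\<in>\<Q>. S Q \<inter> (\<Union>n. E (qq Q n)))"
      define N where "N = (\<Union>Q\<in>\<Q>. S Q - (\<Union>n. T (qq Q n))) \<union> (\<Omega> - (\<Union>Q\<in>\<Q>. S Q))"
      have EqF: "(\<Union>n. E (qq Q n)) \<in> F" if "Q \<in> \<Q>" for Q
        using qqQ E that by (intro FI(5)) auto
      have TqF: "(\<Union>n. T (qq Q n)) \<in> F" if "Q \<in> \<Q>" for Q
        using qqQ TF that by (intro FI(5)) auto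
      have GH: "G \<in> H" unfolding G_def
      proof (rule gS, intro ballI conjI)
        fix Q assume Q: "Q \<in> \<Q>"
        have d1: "S Q - (\<Union>n. E (qq Q n)) \<in> F" using SF EqF[OF Q] Q by (intro FI(4)) auto
        have "S Q - (S Q - (\<Union>n. E (qq Q n))) \<in> F" by (rule FI(4)) (use SF Q d1 in auto)
        moreover have "S Q - (S Q - (\<Union>n. E (qq Q n))) = S Q \<inter> (\<Union>n. E (qq Q n))" by blast
        ultimately show "S Q \<inter> (\<Union>n. E (qq Q n)) \<in> F" by simp
      qed auto
      have NH: "N \<in> H" unfolding N_def
      proof (rule HUn)
        show "(\<Union>Q\<in>\<Q>. S Q - (\<Union>n. T (qq Q n))) \<in> H"
        proof (rule gS, intro ballI conjI)
          fix Q assume Q: "Q \<in> \<Q>"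
          show "S Q - (\<Union>n. T (qq Q n)) \<in> F" using SF TqF[OF Q] Q by (intro FI(4)) auto
        qed auto
        have "(\<Union>Q\<in>\<Q>. S Q) \<in> H" by (rule gS) (use SF in auto)
        then show "\<Omega> - (\<Union>Q\<in>\<Q>. S Q) \<in> H" by (rule HC)
      qed
      have nN: "nul N" unfolding nul_def
      proof (intro conjI ballI NH)
        fix Q0 assume Q0: "Q0 \<in> \<Q>"
        have sub0: "N \<inter> S Q0 \<subseteq> S Q0 - (\<Union>n. T (qq Q0 n))"
        proof
          fix x assume x: "x \<in> N \<inter> S Q0"
          show "x \<in> S Q0 - (\<Union>n. T (qq Q0 n))"
          proof (cases "x \<in> (\<Union>Q\<in>\<Q>. S Q - (\<Union>n. T (qq Q n)))")
            case True
            then obtain Q where Q: "Q \<in> \<Q>" "x \<in> S Q - (\<Union>n. T (qq Q n))" by blast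
            have "Q = Q0"
            proof (rule ccontr)
              assume "Q \<noteq> Q0"
              then have "S Q \<inter> S Q0 = {}" using dS Q Q0 unfolding disjoint_family_on_def by blast
              then show False using x Q by blast
            qed
            then show ?thesis using Q by blast
          next
            case False
            then show ?thesis using x Q0 unfolding N_def by blast
          qed
        qed
        have ss0: "N \<inter> S Q0 \<in> sets P" using trS[OF NH Q0] sP by simp
        show "N \<inter> S Q0 \<in> null_sets P"
          by (rule null_sets_subset[OF qqN[OF Q0] ss0 sub0])
      qed
      have Ga: "G \<subseteq> a"
      proof
        fix x assume "x \<in> G"
        then obtain Q n where Q: "Q \<in> \<Q>" "x \<in> E (qq Q n)" unfolding G_def by blast
        then show "x \<in> a" unfolding a using qqQ[OF Q(1), of n] by blast
      qed
      have aGN: "a - G \<subseteq> N"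
      proof
        fix x assume x: "x \<in> a - G"
        then obtain Q' where Q': "Q' \<in> \<Q>'" "x \<in> E Q'" unfolding a by blast
        have xT: "x \<in> T Q'" using E Q' by blast
        have xO: "x \<in> \<Omega>" using E Q' FI(6) by blast
        show "x \<in> N"
        proof (cases "\<exists>Q\<in>\<Q>. x \<in> S Q")
          case False then show ?thesis using xO unfolding N_def by blast
        next
          case True
          then obtain Q where Q: "Q \<in> \<Q>" "x \<in> S Q" by blast
          have "x \<notin> T (qq Q n)" for n
          proof
            assume xq: "x \<in> T (qq Q n)"
            have "qq Q n = Q'"
            proof (rule ccontr)
              assume "qq Q n \<noteq> Q'"
              then have "T (qq Q n) \<inter> T Q' = {}"
                using dT qqQ[OF Q(1)] Q' unfolding disjoint_family_on_def by blast
              then show False using xq xT by blast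
            qed
            then have "x \<in> G" unfolding G_def using Q Q' by blast
            then show False using x by blast
          qed
          then show ?thesis unfolding N_def using Q by blast
        qed
      qed
      have "G \<union> (a - G) = a" using Ga by blast
      then show "a \<in> C" using Cmem[OF GH nN aGN] by simp
    qed
    have H'C: "H' \<subseteq> C"
    proof
      fix A assume "A \<in> H'"
      then show "A \<in> C" unfolding H'_def hahn_ext_def
      proof (induction rule: sigma_sets.induct)
        case (Basic a)
        then show ?case
        proof
          assume "a \<in> F"
          then have "a \<in> H" unfolding H_def by (rule F_in_hahn)
          then show ?thesis using Cmem[OF _ nul_empty, of a "{}"] by simp
        next
          assume "a \<in> {(\<Union>Q\<in>\<Q>'. E Q) | E. \<forall>Q\<in>\<Q>'. E Q \<in> F \<and> E Q \<subseteq> T Q}"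
          then show ?thesis by (rule genC)
        qed
      next
        case Empty
        show ?case using Cmem[OF HE nul_empty, of "{}"] by simp
      next
        case (Compl a)
        from Cdest[OF Compl.IH] obtain G Z N where a: "a = G \<union> Z" and G: "G \<in> H" and N: "nul N" "Z \<subseteq> N"
          by blast
        have NH: "N \<in> H" using N unfolding nul_def by blast
        have "\<Omega> - a = (\<Omega> - G - N) \<union> ((\<Omega> \<inter> N) - G - Z)" using a N by blast
        moreover have "\<Omega> - G - N \<in> H" using HD[OF HC[OF G] NH] .
        moreover have "(\<Omega> \<inter> N) - G - Z \<subseteq> N" by blast
        ultimately show ?case using Cmem[OF _ N(1)] by metis
      next
        case (Union a)
        have "\<forall>i. \<exists>t. a i = fst t \<union> fst (snd t) \<and> fst t \<in> H \<and> nul (snd (snd t)) \<and> fst (snd t) \<subseteq> snd (snd t)"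
        proof
          fix i
          from Cdest[OF Union.IH[of i]] obtain G Z N where "a i = G \<union> Z" "G \<in> H" "nul N" "Z \<subseteq> N"
            by blast
          then show "\<exists>t. a i = fst t \<union> fst (snd t) \<and> fst t \<in> H \<and> nul (snd (snd t)) \<and> fst (snd t) \<subseteq> snd (snd t)"
            by (intro exI[of _ "(G, Z, N)"]) simp
        qed
        then obtain t where t: "\<And>i. a i = fst (t i) \<union> fst (snd (t i)) \<and> fst (t i) \<in> H \<and> nul (snd (snd (t i))) \<and> fst (snd (t i)) \<subseteq> snd (snd (t i))"
          by metis
        have "(\<Union>i. a i) = (\<Union>i. fst (t i) \<union> fst (snd (t i)))" using t by simp
        also have "\<dots> = (\<Union>i. fst (t i)) \<union> (\<Union>i. fst (snd (t i)))" by (rule UN_Un_distrib)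
        finally have eq: "(\<Union>i. a i) = (\<Union>i. fst (t i)) \<union> (\<Union>i. fst (snd (t i)))" .
        have "(\<Union>i. fst (t i)) \<in> H" using t by (intro HU) simp
        moreover have "nul (\<Union>i. snd (snd (t i)))" using t by (intro nul_UN) simp
        moreover have "(\<Union>i. fst (snd (t i))) \<subseteq> (\<Union>i. snd (snd (t i)))" using t by (intro UN_mono) auto
        ultimately show ?case unfolding eq by (rule Cmem)
      qed
    qed
    have compat: "nul G2" if G2: "G2 \<in> H" "N' \<in> H'" "G2 \<subseteq> N'" "hahn_meas \<Q>' T P N' = 0" for G2 N'
      unfolding nul_def
    proof (intro conjI ballI G2(1))
      fix Q assume Q: "Q \<in> \<Q>"
      have z: "\<forall>Q'\<in>\<Q>'. emeasure P (N' \<inter> T Q') = 0"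
        using hahn_null_iff[OF Pp TF, of N'] G2(4) by blast
      have "N' \<inter> T (qT n) \<in> null_sets P" for n
        by (rule null_setsI) (use z qT trT[OF G2(2), of "qT n"] sP in auto)
      then have BN: "(\<Omega> - (\<Union>n. T (qT n))) \<union> (\<Union>n. N' \<inter> T (qT n)) \<in> null_sets P"
        using PT by (intro null_sets.Un null_sets_UN) auto
      have Bsub: "G2 \<inter> S Q \<subseteq> (\<Omega> - (\<Union>n. T (qT n))) \<union> (\<Union>n. N' \<inter> T (qT n))"
      proof
        fix x assume x: "x \<in> G2 \<inter> S Q"
        then have "x \<in> \<Omega>" "x \<in> N'" using HS[OF G2(1)] G2(3) by auto
        then show "x \<in> (\<Omega> - (\<Union>n. T (qT n))) \<union> (\<Union>n. N' \<inter> T (qT n))" by blast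
      qed
      show "G2 \<inter> S Q \<in> null_sets P"
        by (rule null_sets_subset[OF BN _ Bsub]) (use trS[OF G2(1) Q] sP in simp)
    qed
    show ?thesis
    proof
      fix x assume "x \<in> {G' \<union> Z | G' Z. G' \<in> H' \<and> (\<exists>N\<in>H'. Z \<subseteq> N \<and> hahn_meas \<Q>' T P N = 0)}"
      then obtain G' Z N' where x: "x = G' \<union> Z" and G': "G' \<in> H'" and N': "N' \<in> H'" "Z \<subseteq> N'"
        "hahn_meas \<Q>' T P N' = 0" by auto
      obtain G1 Z1 N1 where G'e: "G' = G1 \<union> Z1" "G1 \<in> H" "nul N1" "Z1 \<subseteq> N1"
        using Cdest[of G'] H'C G' by blast
      obtain G2 Z2 N2 where N'e: "N' = G2 \<union> Z2" "G2 \<in> H" "nul N2" "Z2 \<subseteq> N2"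
        using Cdest[of N'] H'C N'(1) by blast
      have "nul G2" using compat[OF N'e(2) N'(1) _ N'(3)] N'e(1) by blast
      then have "nul (N1 \<union> G2 \<union> N2)" using G'e N'e nul_Un by blast
      moreover have "x = G1 \<union> (Z1 \<union> Z)" using x G'e by blast
      moreover have "Z1 \<union> Z \<subseteq> N1 \<union> G2 \<union> N2" using G'e N'e N' by blast
      ultimately have "x \<in> C" using Cmem[OF G'e(2)] by metis
      then show "x \<in> {G' \<union> Z | G' Z. G' \<in> H \<and> (\<exists>N\<in>H. Z \<subseteq> N \<and> hahn_meas \<Q> S P N = 0)}"
        using C_eq by simp
    qed
  qed
  show ?thesis unfolding fam_completion_def H_def[symmetric] H'_def[symmetric]
    by (rule INT_anti_mono[OF order_refl]) (rule main)
qed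


theorem corollary4p8:
  fixes \<Omega> :: "'a set" and F :: "'a set set" and \<P> \<Q> \<Q>' :: "'a measure set"
    and S T :: "'a measure \<Rightarrow> 'a set"
  assumes "sigma_algebra \<Omega> F"
    and "\<forall>P\<in>\<P>. prob_on \<Omega> F P"
    and "pre_hahn_localizable \<Omega> F \<P>"
    and "convex_family F \<P>"
    and "is_localization \<Omega> F \<P> \<Q> S" and "disjoint_family_on S \<Q>"
    and "is_localization \<Omega> F \<P> \<Q>' T" and "disjoint_family_on T \<Q>'"
  shows "fam_completion (hahn_ext \<Omega> F \<Q> S) (hahn_meas \<Q> S) \<P>
       = fam_completion (hahn_ext \<Omega> F \<Q>' T) (hahn_meas \<Q>' T) \<P>"
proof (rule equalityI)
  show "fam_completion (hahn_ext \<Omega> F \<Q> S) (hahn_meas \<Q> S) \<P>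
       \<subseteq> fam_completion (hahn_ext \<Omega> F \<Q>' T) (hahn_meas \<Q>' T) \<P>"
    by (rule one_dir[OF assms(1,2,7,8,5,6)])
  show "fam_completion (hahn_ext \<Omega> F \<Q>' T) (hahn_meas \<Q>' T) \<P>
       \<subseteq> fam_completion (hahn_ext \<Omega> F \<Q> S) (hahn_meas \<Q> S) \<P>"
    by (rule one_dir[OF assms(1,2,5,6,7,8)])
qed

end
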